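(* Let $k\ge2$, $n\ge1$ be integers, let $\bar{\mathcal{P}}\in\mathbb{R}^{[k,n]}$ be a columnwise-substochastic tensor, $\alpha\in[0,1)$, and let $\mathbf{v}\in\mathbb{R}^n$ be a positive stochastic vector. Then every nonnegative solution $\mathbf{y}_*$ of the MLPPR system $(\mathbf{e}^T\mathbf{y})^{k-2}\mathbf{y}-\alpha\bar{\mathcal{P}}\mathbf{y}^{k-1}=\mathbf{v}$ (equivalently, every fixed point $\mathbf{y}_*=\Phi(\mathbf{y}_* )$ in $\Delta$ of the map $\Phi(\mathbf{y}):=(1+\alpha\mathbf{e}^T(\bar{\mathcal{P}}\mathbf{y}^{k-1}))^{-\frac{k-2}{k-1}}(\mathbf{v}+\alpha\bar{\mathcal{P}}\mathbf{y}^{k-1})$) is a positive vector.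
   Context: For $\mathcal{P}\in\mathbb{R}^{[k,n]}$ (real tensors of order $k$, dimension $n$) and $\mathbf{y}\in\mathbb{R}^n$, $(\mathcal{P}\mathbf{y}^{k-1})_i=\sum_{i_2,\dots,i_k}p_{i i_2\dots i_k}y_{i_2}\cdots y_{i_k}$. $\bar{\mathcal{P}}$ is columnwise-substochastic if its entries are nonnegative and $\sum_{i}\bar p_{i i_2\dots i_k}\le1$ for all $i_2,\dots,i_k$. $\mathbf{e}$ is the all-ones vector; a stochastic vector is nonnegative with entries summing to $1$. $\Delta:=\{\mathbf{y}\in\mathbb{R}^n_+:\mathbf{e}^T\mathbf{y}\le(1-\alpha)^{-\frac{1}{k-1}}\}$. *)

theory Defs
  imports Complex_Main
begin

text \<open>A real tensor of order k and dimension n is modelled as a function on index lists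
  (i1,...,ik) (as a list of length k, entries < n). Vectors in R^n are functions
  nat => real, only the entries with index < n being relevant.\<close>

type_synonym tensor = "nat list \<Rightarrow> real"

definition idx_lists :: "nat \<Rightarrow> nat \<Rightarrow> nat list set" where
  "idx_lists m n = {js. length js = m \<and> set js \<subseteq> {..<n}}"

definition tensor_apply :: "nat \<Rightarrow> nat \<Rightarrow> tensor \<Rightarrow> (nat \<Rightarrow> real) \<Rightarrow> nat \<Rightarrow> real" where
  "tensor_apply k n P y i = (\<Sum>js\<in>idx_lists (k - 1) n. P (i # js) * prod_list (map y js))"

definition col_substochastic :: "nat \<Rightarrow> nat \<Rightarrow> tensor \<Rightarrow> bool" where
  "col_substochastic k n P \<longleftrightarrow>
     (\<forall>is\<in>idx_lists k n. 0 \<le> P is) \<and>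
     (\<forall>js\<in>idx_lists (k - 1) n. (\<Sum>i<n. P (i # js)) \<le> 1)"

definition stochastic_vec :: "nat \<Rightarrow> (nat \<Rightarrow> real) \<Rightarrow> bool" where
  "stochastic_vec n v \<longleftrightarrow> (\<forall>i<n. 0 \<le> v i) \<and> (\<Sum>i<n. v i) = 1"

definition esum :: "nat \<Rightarrow> (nat \<Rightarrow> real) \<Rightarrow> real" where
  "esum n y = (\<Sum>i<n. y i)"

definition Delta :: "nat \<Rightarrow> nat \<Rightarrow> real \<Rightarrow> (nat \<Rightarrow> real) set" where
  "Delta k n \<alpha> = {y. (\<forall>i<n. 0 \<le> y i) \<and> esum n y \<le> (1 - \<alpha>) powr (- 1 / (real k - 1))}"

definition Phi :: "nat \<Rightarrow> nat \<Rightarrow> real \<Rightarrow> tensor \<Rightarrow> (nat \<Rightarrow> real) \<Rightarrow> (nat \<Rightarrow> real) \<Rightarrow> nat \<Rightarrow> real" where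
  "Phi k n \<alpha> P v y i =
     (1 + \<alpha> * esum n (tensor_apply k n P y)) powr (- (real k - 2) / (real k - 1))
       * (v i + \<alpha> * tensor_apply k n P y i)"

end

theory Submission
  imports Defs
begin

lemma prod_list_nonneg_map:
  assumes "\<forall>x\<in>set js. 0 \<le> (y x::real)"
  shows "0 \<le> prod_list (map y js)"
  using assms by (induction js) auto

lemma tensor_apply_nonneg:
  assumes "k \<ge> 2" "col_substochastic k n P" "\<forall>i<n. 0 \<le> y i" "i < n"
  shows "0 \<le> tensor_apply k n P y i"
  unfolding tensor_apply_def
proof (rule sum_nonneg)
  fix js assume js: "js \<in> idx_lists (k - 1) n"
  have "i # js \<in> idx_lists k n" using js assms(1,4) by (auto simp: idx_lists_def)
  hence "0 \<le> P (i # js)" using assms(2) by (auto simp: col_substochastic_def)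
  moreover have "0 \<le> prod_list (map y js)"
    using js assms(3) by (intro prod_list_nonneg_map) (auto simp: idx_lists_def)
  ultimately show "0 \<le> P (i # js) * prod_list (map y js)" by simp
qed

theorem corollary3p7:
  fixes k n :: nat and P :: tensor and \<alpha> :: real and v :: "nat \<Rightarrow> real"
  assumes "k \<ge> 2" and "n \<ge> 1"
    and "col_substochastic k n P"
    and "0 \<le> \<alpha>" and "\<alpha> < 1"
    and "stochastic_vec n v" and "\<forall>i<n. 0 < v i"
  shows "(\<forall>y. (\<forall>i<n. 0 \<le> y i) \<and>
              (\<forall>i<n. esum n y ^ (k - 2) * y i - \<alpha> * tensor_apply k n P y i = v i)
              \<longrightarrow> (\<forall>i<n. 0 < y i))
       \<and> (\<forall>y. y \<in> Delta k n \<alpha> \<and> (\<forall>i<n. y i = Phi k n \<alpha> P v y i)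
              \<longrightarrow> (\<forall>i<n. 0 < y i))"
proof (intro conjI allI impI)
  fix y i assume H: "(\<forall>i<n. 0 \<le> y i) \<and>
              (\<forall>i<n. esum n y ^ (k - 2) * y i - \<alpha> * tensor_apply k n P y i = v i)"
    and i: "i < n"
  have T: "0 \<le> tensor_apply k n P y i" using tensor_apply_nonneg[OF assms(1,3)] H i by blast
  have e: "0 \<le> esum n y" using H unfolding esum_def by (auto intro: sum_nonneg)
  have "esum n y ^ (k - 2) * y i = v i + \<alpha> * tensor_apply k n P y i" using H i by force
  also have "\<dots> > 0" using T assms(4,7) i by (simp add: add_pos_nonneg)
  finally have "esum n y ^ (k - 2) * y i > 0" .
  moreover have "y i \<ge> 0" using H i by blast
  ultimately show "0 < y i"
    by (metis less_eq_real_def mult_zero_right order_less_irrefl)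
next
  fix y i assume H: "y \<in> Delta k n \<alpha> \<and> (\<forall>i<n. y i = Phi k n \<alpha> P v y i)"
    and i: "i < n"
  have yn: "\<forall>i<n. 0 \<le> y i" using H unfolding Delta_def by blast
  have T: "0 \<le> tensor_apply k n P y i" using tensor_apply_nonneg[OF assms(1,3) yn i] .
  have ET: "0 \<le> esum n (tensor_apply k n P y)" unfolding esum_def
    using tensor_apply_nonneg[OF assms(1,3) yn] by (auto intro: sum_nonneg)
  have b: "0 < 1 + \<alpha> * esum n (tensor_apply k n P y)" using ET assms(4)
    by (simp add: add_pos_nonneg)
  have "0 < v i + \<alpha> * tensor_apply k n P y i" using T assms(4,7) i by (simp add: add_pos_nonneg)
  hence "0 < Phi k n \<alpha> P v y i" unfolding Phi_def using b by simp
  thus "0 < y i" using H i by simp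
qed

end
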